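(* Let $G$ be a finite group with identity $e$, $R[G]$ its real group algebra, and $S=\{x\in R[G]: \sum_g x_g=1,\ x_g\ge0 \ \forall g\}$. For $x\in S$ let $n_x,G_x,c_x,m_x$ be as defined in the context, and let $S(x)$ be the set of all limits of all convergent subsequences of $(x^m)_{m\in\mathbb N}$. Then for every $x\in S$: $$xc_x=c_xx,\qquad S(x)=\{c_xx^r:\ 0\le r<m_x\}.$$ In particular $|S(x)|=1$, i.e. $S(x)=\{c_x\}$, if and only if $x\in R[G_x]$.
   Context: Elements of $R[G]$ are written $x=\sum_{g\in G}x_gg$; $\mathrm{Supp}(x)=\{g\in G: x_g\neq0\}$; $\mathbb N=\{1,2,\dots\}$; $R[G]$ carries the Euclidean topology. For $x\in S$: $n_x=\min\{k\in\mathbb N: (x^k)_e\ne0\}$; $G_x$ is the subgroup of $G$ generated by $\mathrm{Supp}(x^{n_x})$; $c_x=\frac1{|G_x|}\sum_{g\in G_x}g$; $m_x=\min\{k\in\mathbb N:\ \mathrm{Supp}(x^k)\subset G_x\}$. $R[G_x]$ denotes the subspace of $R[G]$ spanned by $G_x$. *)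

theory Defs
  imports "HOL-Analysis.Analysis" "HOL-Algebra.Generated_Groups"
begin

text \<open>Elements of the real group algebra R[G] of a (finite) group G (HOL-Algebra structure)
  are represented as functions carrier G \<rightarrow> real, extended by 0 outside the carrier.
  The space 'a \<Rightarrow> real carries the product topology, which on the finite-dimensional
  subspace R[G] is the Euclidean topology.\<close>

definition galg :: "('a, 'b) monoid_scheme \<Rightarrow> ('a \<Rightarrow> real) set" where
  "galg G = {x. \<forall>g. g \<notin> carrier G \<longrightarrow> x g = 0}"

definition gconv :: "('a, 'b) monoid_scheme \<Rightarrow> ('a \<Rightarrow> real) \<Rightarrow> ('a \<Rightarrow> real) \<Rightarrow> ('a \<Rightarrow> real)" where
  "gconv G x y = (\<lambda>g. if g \<in> carrier G
      then (\<Sum>h\<in>carrier G. x h * y (inv\<^bsub>G\<^esub> h \<otimes>\<^bsub>G\<^esub> g)) else 0)"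

definition gdelta :: "('a, 'b) monoid_scheme \<Rightarrow> 'a \<Rightarrow> ('a \<Rightarrow> real)" where
  "gdelta G a = (\<lambda>g. if g = a then 1 else 0)"

primrec gpow :: "('a, 'b) monoid_scheme \<Rightarrow> ('a \<Rightarrow> real) \<Rightarrow> nat \<Rightarrow> ('a \<Rightarrow> real)" where
  "gpow G x 0 = gdelta G \<one>\<^bsub>G\<^esub>"
| "gpow G x (Suc n) = gconv G (gpow G x n) x"

definition gsupp :: "('a, 'b) monoid_scheme \<Rightarrow> ('a \<Rightarrow> real) \<Rightarrow> 'a set" where
  "gsupp G x = {g \<in> carrier G. x g \<noteq> 0}"

definition simplexS :: "('a, 'b) monoid_scheme \<Rightarrow> ('a \<Rightarrow> real) set" where
  "simplexS G = {x \<in> galg G. (\<forall>g\<in>carrier G. x g \<ge> 0) \<and> (\<Sum>g\<in>carrier G. x g) = 1}"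

definition n_x :: "('a, 'b) monoid_scheme \<Rightarrow> ('a \<Rightarrow> real) \<Rightarrow> nat" where
  "n_x G x = (LEAST k. k \<ge> 1 \<and> gpow G x k \<one>\<^bsub>G\<^esub> \<noteq> 0)"

definition G_x :: "('a, 'b) monoid_scheme \<Rightarrow> ('a \<Rightarrow> real) \<Rightarrow> 'a set" where
  "G_x G x = generate G (gsupp G (gpow G x (n_x G x)))"

definition c_x :: "('a, 'b) monoid_scheme \<Rightarrow> ('a \<Rightarrow> real) \<Rightarrow> ('a \<Rightarrow> real)" where
  "c_x G x = (\<lambda>g. if g \<in> G_x G x then 1 / real (card (G_x G x)) else 0)"

definition m_x :: "('a, 'b) monoid_scheme \<Rightarrow> ('a \<Rightarrow> real) \<Rightarrow> nat" where
  "m_x G x = (LEAST k. k \<ge> 1 \<and> gsupp G (gpow G x k) \<subseteq> G_x G x)"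

definition galg_sub :: "('a, 'b) monoid_scheme \<Rightarrow> 'a set \<Rightarrow> ('a \<Rightarrow> real) set" where
  "galg_sub G H = {y \<in> galg G. \<forall>g. y g \<noteq> 0 \<longrightarrow> g \<in> H}"

definition limset :: "('a, 'b) monoid_scheme \<Rightarrow> ('a \<Rightarrow> real) \<Rightarrow> ('a \<Rightarrow> real) set" where
  "limset G x = {L. \<exists>r::nat \<Rightarrow> nat. strict_mono r \<and>
       (\<lambda>k. gpow G x (Suc (r k))) \<longlonglongrightarrow> L}"

end

theory Submission
  imports Defs "HOL-Algebra.Multiplicative_Group"
begin


lemma tendsto_fun_iff: "((f :: 'c \<Rightarrow> 'a \<Rightarrow> real) \<longlongrightarrow> l) F \<longleftrightarrow> (\<forall>i. ((\<lambda>k. f k i) \<longlongrightarrow> l i) F)"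
proof -
  have "(f \<longlongrightarrow> l) F \<longleftrightarrow> limitin euclidean f l F" by simp
  also have "\<dots> \<longleftrightarrow> limitin (product_topology (\<lambda>_. euclidean) UNIV) f l F"
    by (simp only: euclidean_product_topology)
  also have "\<dots> \<longleftrightarrow> (\<forall>i. limitin euclidean (\<lambda>k. f k i) (l i) F)"
    by (simp only: limitin_componentwise) simp
  also have "\<dots> \<longleftrightarrow> (\<forall>i. ((\<lambda>k. f k i) \<longlongrightarrow> l i) F)" by simp
  finally show ?thesis .
qed

locale fgrp = group G for G :: "('a, 'b) monoid_scheme" (structure) +
  assumes fin: "finite (carrier G)"
begin

lemma conv_out: "g \<notin> carrier G \<Longrightarrow> gconv G x y g = 0"
  by (simp add: gconv_def)

lemma conv_in: "g \<in> carrier G \<Longrightarrow> gconv G x y g = (\<Sum>h\<in>carrier G. x h * y (inv h \<otimes> g))"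
  by (simp add: gconv_def)

lemma sum_left_mult: "a \<in> carrier G \<Longrightarrow> (\<Sum>h\<in>carrier G. f (a \<otimes> h)) = (\<Sum>h\<in>carrier G. (f h :: real))"
  apply (rule sum.reindex_bij_witness[where i="\<lambda>h. inv a \<otimes> h" and j="\<lambda>h. a \<otimes> h"])
  by (auto simp: m_assoc[symmetric])

lemma cancel1: "a \<in> carrier G \<Longrightarrow> b \<in> carrier G \<Longrightarrow> a \<otimes> (inv a \<otimes> b) = b"
  by (simp add: m_assoc[symmetric])

lemma cancel2: "a \<in> carrier G \<Longrightarrow> b \<in> carrier G \<Longrightarrow> inv a \<otimes> (a \<otimes> b) = b"
  by (simp add: m_assoc[symmetric])

lemma conv_assoc: "gconv G (gconv G x y) z = gconv G x (gconv G y z)"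
proof
  fix g
  show "gconv G (gconv G x y) z g = gconv G x (gconv G y z) g"
  proof (cases "g \<in> carrier G")
    case False then show ?thesis by (simp add: conv_out)
  next
    case g: True
    have "gconv G (gconv G x y) z g = (\<Sum>h\<in>carrier G. \<Sum>k\<in>carrier G. x k * y (inv k \<otimes> h) * z (inv h \<otimes> g))"
      using g by (simp add: conv_in sum_distrib_right)
    also have "\<dots> = (\<Sum>k\<in>carrier G. \<Sum>h\<in>carrier G. x k * y (inv k \<otimes> h) * z (inv h \<otimes> g))"
      by (rule sum.swap)
    also have "\<dots> = (\<Sum>k\<in>carrier G. x k * (\<Sum>h\<in>carrier G. y h * z (inv h \<otimes> (inv k \<otimes> g))))"
    proof (rule sum.cong[OF refl])
      fix k assume k: "k \<in> carrier G"
      have "(\<Sum>h\<in>carrier G. y h * z (inv h \<otimes> (inv k \<otimes> g))) =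
            (\<Sum>h\<in>carrier G. y (inv k \<otimes> (k \<otimes> h)) * z (inv (inv k \<otimes> (k \<otimes> h)) \<otimes> (inv k \<otimes> g)))"
        using k by (simp add: m_assoc[symmetric])
      also have "\<dots> = (\<Sum>h\<in>carrier G. y (inv k \<otimes> h) * z (inv (inv k \<otimes> h) \<otimes> (inv k \<otimes> g)))"
        using sum_left_mult[OF k, of "\<lambda>h. y (inv k \<otimes> h) * z (inv (inv k \<otimes> h) \<otimes> (inv k \<otimes> g))"] by simp
      also have "\<dots> = (\<Sum>h\<in>carrier G. y (inv k \<otimes> h) * z (inv h \<otimes> g))"
        using k g by (intro sum.cong refl) (simp add: inv_mult_group m_assoc cancel1)
      finally show "(\<Sum>h\<in>carrier G. x k * y (inv k \<otimes> h) * z (inv h \<otimes> g)) =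
         x k * (\<Sum>h\<in>carrier G. y h * z (inv h \<otimes> (inv k \<otimes> g)))"
        by (simp add: sum_distrib_left mult.assoc)
    qed
    also have "\<dots> = gconv G x (gconv G y z) g"
      using g by (simp add: conv_in)
    finally show ?thesis .
  qed
qed


lemma inv_mult_one_iff: "h \<in> carrier G \<Longrightarrow> g \<in> carrier G \<Longrightarrow> (inv h \<otimes> g = \<one>) = (h = g)"
  by (metis cancel1 inv_closed r_inv r_one)

lemma conv_galg: "gconv G x y \<in> galg G"
  by (simp add: galg_def conv_out)

lemma delta_galg: "gdelta G \<one> \<in> galg G"
  by (auto simp: galg_def gdelta_def)

lemma conv_delta_left: "z \<in> galg G \<Longrightarrow> gconv G (gdelta G \<one>) z = z"
proof
  fix g assume z: "z \<in> galg G"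
  show "gconv G (gdelta G \<one>) z g = z g"
  proof (cases "g \<in> carrier G")
    case True
    have "gconv G (gdelta G \<one>) z g = (\<Sum>h\<in>carrier G. if h = \<one> then z (inv h \<otimes> g) else 0)"
      using True by (auto simp: conv_in gdelta_def intro!: sum.cong)
    also have "\<dots> = z g" using True by (simp add: sum.delta fin)
    finally show ?thesis .
  qed (use z in \<open>auto simp: conv_out galg_def\<close>)
qed

lemma conv_delta_right: "z \<in> galg G \<Longrightarrow> gconv G z (gdelta G \<one>) = z"
proof
  fix g assume z: "z \<in> galg G"
  show "gconv G z (gdelta G \<one>) g = z g"
  proof (cases "g \<in> carrier G")
    case True
    have "gconv G z (gdelta G \<one>) g = (\<Sum>h\<in>carrier G. if h = g then z h else 0)"
      using True by (auto simp: conv_in gdelta_def inv_mult_one_iff intro!: sum.cong)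
    also have "\<dots> = z g" using True by (simp add: sum.delta fin)
    finally show ?thesis .
  qed (use z in \<open>auto simp: conv_out galg_def\<close>)
qed

lemma gpow_galg: "gpow G x k \<in> galg G"
  by (cases k) (auto simp: delta_galg conv_galg)

lemma gpow_add: "gpow G x (a + b) = gconv G (gpow G x a) (gpow G x b)"
  by (induction b) (auto simp: conv_delta_right gpow_galg conv_assoc)

lemma gpow_one: "x \<in> galg G \<Longrightarrow> gpow G x 1 = x"
  by (simp add: conv_delta_left)

lemma gpow_mult: "gpow G x (a * b) = gpow G (gpow G x a) b"
proof (induction b)
  case (Suc b)
  have "gpow G x (a * Suc b) = gpow G x (a * b + a)" by (simp add: add.commute)
  then show ?case using Suc by (simp only: gpow_add) simp
qed simp

lemma gpow_comm: "gconv G (gpow G x a) (gpow G x b) = gconv G (gpow G x b) (gpow G x a)"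
  by (metis gpow_add add.commute)

lemma conv_lin_left: "gconv G (\<lambda>g. a * p g + b * q g) w = (\<lambda>g. a * gconv G p w g + b * gconv G q w g)"
  by (rule ext) (simp add: gconv_def algebra_simps sum.distrib sum_distrib_left)

lemma conv_lin_right: "gconv G w (\<lambda>g. a * p g + b * q g) = (\<lambda>g. a * gconv G w p g + b * gconv G w q g)"
  by (rule ext) (simp add: gconv_def algebra_simps sum.distrib sum_distrib_left)

lemma mass_conv: "(\<Sum>g\<in>carrier G. gconv G z w g) = (\<Sum>g\<in>carrier G. z g) * (\<Sum>g\<in>carrier G. w g)"
proof -
  have "(\<Sum>g\<in>carrier G. gconv G z w g) = (\<Sum>g\<in>carrier G. \<Sum>h\<in>carrier G. z h * w (inv h \<otimes> g))"
    by (simp add: conv_in)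
  also have "\<dots> = (\<Sum>h\<in>carrier G. z h * (\<Sum>g\<in>carrier G. w (inv h \<otimes> g)))"
    by (subst sum.swap) (simp add: sum_distrib_left)
  also have "\<dots> = (\<Sum>h\<in>carrier G. z h * (\<Sum>g\<in>carrier G. w g))"
    by (intro sum.cong refl) (simp add: sum_left_mult)
  finally show ?thesis by (simp add: sum_distrib_right)
qed

lemma mass_gpow: "(\<Sum>g\<in>carrier G. gpow G z k g) = (\<Sum>g\<in>carrier G. z g) ^ k"
proof (induction k)
  case 0
  show ?case by (simp add: gdelta_def sum.delta fin)
next
  case (Suc k)
  then show ?case by (simp add: mass_conv)
qed

lemma conv_nonneg: "(\<And>g. z g \<ge> 0) \<Longrightarrow> (\<And>g. w g \<ge> 0) \<Longrightarrow> gconv G z w g \<ge> 0"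
  by (simp add: gconv_def sum_nonneg)

lemma gpow_nonneg: "(\<And>g. z g \<ge> 0) \<Longrightarrow> gpow G z k g \<ge> 0"
proof (induction k arbitrary: g)
  case 0 then show ?case by (simp add: gdelta_def)
next
  case (Suc k) then show ?case by (simp add: conv_nonneg)
qed

lemma entry_le_mass: "(\<And>g. z g \<ge> 0) \<Longrightarrow> z \<in> galg G \<Longrightarrow> z g \<le> (\<Sum>h\<in>carrier G. z h)"
  apply (cases "g \<in> carrier G")
   apply (rule member_le_sum; simp add: fin)
  by (simp add: galg_def sum_nonneg)

definition smul :: "'a set \<Rightarrow> 'a set \<Rightarrow> 'a set" where
  "smul A B = {a \<otimes> b | a b. a \<in> A \<and> b \<in> B}"

lemma supp_conv_sub: "gsupp G (gconv G z w) \<subseteq> smul (gsupp G z) (gsupp G w)"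
proof
  fix g assume g: "g \<in> gsupp G (gconv G z w)"
  then have gc: "g \<in> carrier G" and ne: "(\<Sum>h\<in>carrier G. z h * w (inv h \<otimes> g)) \<noteq> 0"
    by (auto simp: gsupp_def conv_in)
  then obtain h where h: "h \<in> carrier G" "z h * w (inv h \<otimes> g) \<noteq> 0"
    by (meson sum.neutral)
  then show "g \<in> smul (gsupp G z) (gsupp G w)"
    unfolding smul_def gsupp_def using gc
    by (intro CollectI exI[of _ h] exI[of _ "inv h \<otimes> g"]) (auto simp: cancel1)
qed

lemma supp_conv_sup:
  assumes "\<And>g. z g \<ge> 0" "\<And>g. w g \<ge> 0"
  shows "smul (gsupp G z) (gsupp G w) \<subseteq> gsupp G (gconv G z w)"
proof
  fix g assume "g \<in> smul (gsupp G z) (gsupp G w)"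
  then obtain a b where ab: "g = a \<otimes> b" "a \<in> carrier G" "b \<in> carrier G" "z a \<noteq> 0" "w b \<noteq> 0"
    by (auto simp: smul_def gsupp_def)
  have "0 < z a * w (inv a \<otimes> g)"
    using ab assms by (simp add: cancel2 less_le)
  also have "\<dots> \<le> (\<Sum>h\<in>carrier G. z h * w (inv h \<otimes> g))"
    using ab assms by (intro member_le_sum) (auto simp: fin)
  finally show "g \<in> gsupp G (gconv G z w)"
    using ab by (auto simp: gsupp_def conv_in)
qed

lemma supp_conv: "(\<And>g. z g \<ge> 0) \<Longrightarrow> (\<And>g. w g \<ge> 0) \<Longrightarrow>
   gsupp G (gconv G z w) = smul (gsupp G z) (gsupp G w)"
  using supp_conv_sub supp_conv_sup by blast

end


locale fx = fgrp G for G :: "('a, 'b) monoid_scheme" (structure) +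
  fixes x :: "'a \<Rightarrow> real"
  assumes xS: "x \<in> simplexS G"
begin

lemma x_galg: "x \<in> galg G" using xS by (simp add: simplexS_def)

lemma x_nonneg: "x g \<ge> 0"
  using xS by (cases "g \<in> carrier G") (auto simp: simplexS_def galg_def)

lemma x_mass: "(\<Sum>g\<in>carrier G. x g) = 1" using xS by (simp add: simplexS_def)

abbreviation P :: "nat \<Rightarrow> 'a set" where "P k \<equiv> gsupp G (gpow G x k)"

lemma xk_nonneg: "gpow G x k g \<ge> 0"
  by (rule gpow_nonneg) (rule x_nonneg)

lemma xk_mass: "(\<Sum>g\<in>carrier G. gpow G x k g) = 1"
  by (simp add: mass_gpow x_mass)

lemma P_add: "P (a + b) = smul (P a) (P b)"
  by (simp add: gpow_add supp_conv xk_nonneg)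

lemma P_sub: "P k \<subseteq> carrier G" by (auto simp: gsupp_def)

lemma P_0: "P 0 = {\<one>}" by (auto simp: gsupp_def gdelta_def)

lemma x_delta [simp]: "gconv G (gdelta G \<one>) x = x" by (rule conv_delta_left[OF x_galg])

lemma gsupp_delta [simp]: "gsupp G (gdelta G \<one>) = {\<one>}" by (auto simp: gsupp_def gdelta_def)

lemma P_1: "P 1 = gsupp G x" by simp

lemma one_in_P: "(\<one> \<in> P k) = (gpow G x k \<one> \<noteq> 0)" by (simp add: gsupp_def)

lemma n_exists: "\<exists>k. k \<ge> 1 \<and> gpow G x k \<one> \<noteq> 0"
proof -
  obtain a where a: "a \<in> carrier G" "x a \<noteq> 0"
    using x_mass by (metis sum.neutral zero_neq_one)
  have aP: "a \<in> P 1" using a by (simp add: P_1 gsupp_def)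
  have pw: "a [^] k \<in> P k" for k
  proof (induction k)
    case 0 then show ?case by (simp add: P_0)
  next
    case (Suc k)
    have "a [^] k \<otimes> a \<in> smul (P k) (P 1)" using Suc aP by (auto simp: smul_def)
    then show ?case using P_add[of k 1] by simp
  qed
  have "order G \<ge> 1" using fin by (metis One_nat_def Suc_leI card_gt_0_iff empty_iff one_closed order_def)
  moreover have "\<one> \<in> P (order G)" using pw[of "order G"] pow_order_eq_1[OF a(1)] by simp
  ultimately show ?thesis using one_in_P by blast
qed

definition nn where "nn = n_x G x"
definition H where "H = G_x G x"

lemma nn_prop: "nn \<ge> 1" "\<one> \<in> P nn"
  using LeastI_ex[OF n_exists] by (auto simp: nn_def n_x_def one_in_P)

lemma H_subgroup: "subgroup H G"
  unfolding H_def G_x_def nn_def[symmetric] by (rule generate_is_subgroup[OF P_sub])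

lemma Pnn_H: "P nn \<subseteq> H"
  unfolding H_def G_x_def nn_def[symmetric] by (auto intro: generate.incl)

lemma H_carrier: "H \<subseteq> carrier G" using H_subgroup subgroup.subset by blast

lemma H_fin: "finite H" using H_carrier fin finite_subset by blast

lemma one_H: "\<one> \<in> H" using H_subgroup subgroup.one_closed by blast

lemma smul_H: "A \<subseteq> H \<Longrightarrow> B \<subseteq> H \<Longrightarrow> smul A B \<subseteq> H"
  by (auto simp: smul_def intro!: subgroup.m_closed[OF H_subgroup])

lemma Pnnj_H: "P (nn * j) \<subseteq> H"
proof (induction j)
  case 0 then show ?case by (simp add: P_0 one_H)
next
  case (Suc j)
  have "P (nn * Suc j) = smul (P (nn * j)) (P nn)" by (simp add: P_add[symmetric] add.commute)
  then show ?case using Suc Pnn_H smul_H by simp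
qed

lemma one_Pnnj: "\<one> \<in> P (nn * j)"
proof (induction j)
  case 0 then show ?case by (simp add: P_0)
next
  case (Suc j)
  have "P (nn * Suc j) = smul (P (nn * j)) (P nn)" by (simp add: P_add[symmetric] add.commute)
  moreover have "\<one> \<otimes> \<one> \<in> smul (P (nn * j)) (P nn)" unfolding smul_def using Suc nn_prop by blast
  ultimately show ?case by simp
qed

lemma Pnnj_mono: "P (nn * j) \<subseteq> P (nn * Suc j)"
proof
  fix b assume b: "b \<in> P (nn * j)"
  have "P (nn * Suc j) = smul (P (nn * j)) (P nn)" by (simp add: P_add[symmetric] add.commute)
  moreover have "b \<otimes> \<one> \<in> smul (P (nn * j)) (P nn)" using b nn_prop by (auto simp: smul_def)
  moreover have "b \<in> carrier G" using b P_sub by blast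
  ultimately show "b \<in> P (nn * Suc j)" by simp
qed

lemma stab_exists: "\<exists>j\<ge>1. P (nn * j) = P (nn * Suc j)"
proof (rule ccontr)
  assume "\<not> ?thesis"
  then have strict: "P (nn * j) \<subset> P (nn * Suc j)" if "j \<ge> 1" for j
    using Pnnj_mono that by blast
  have fP: "finite (P k)" for k using P_sub fin finite_subset by blast
  have cardge: "card (P (nn * Suc j)) \<ge> Suc j" for j
  proof (induction j)
    case 0 then show ?case using one_Pnnj[of 1] fP by (metis One_nat_def card_0_eq empty_iff not_less_eq_eq le_0_eq)
  next
    case (Suc j)
    have "card (P (nn * Suc j)) < card (P (nn * Suc (Suc j)))"
      using strict[of "Suc j"] fP psubset_card_mono by auto
    then show ?case using Suc by simp
  qed
  have "card (P (nn * Suc (card H))) \<le> card H"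
    using Pnnj_H H_fin card_mono by blast
  with cardge[of "card H"] show False by simp
qed

definition j0 where "j0 = (SOME j. j \<ge> 1 \<and> P (nn * j) = P (nn * Suc j))"

lemma j0_prop: "j0 \<ge> 1" "P (nn * j0) = P (nn * Suc j0)"
  using someI_ex[OF stab_exists] by (auto simp: j0_def)

definition M where "M = nn * j0"

lemma M_ge1: "M \<ge> 1" using nn_prop j0_prop by (simp add: M_def)

lemma P_stable: "P (M + nn * i) = P M"
proof (induction i)
  case 0 then show ?case by simp
next
  case (Suc i)
  have "P (M + nn * Suc i) = smul (P (M + nn * i)) (P nn)"
    by (simp add: P_add[symmetric] add.commute add.left_commute)
  also have "\<dots> = smul (P M) (P nn)" using Suc by simp
  also have "\<dots> = P (nn * Suc j0)" by (simp add: P_add[symmetric] M_def add.commute)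
  finally show ?case using j0_prop by (simp add: M_def)
qed

lemma PM_closed: "smul (P M) (P M) = P M"
  using P_stable[of j0] by (simp add: P_add[symmetric] M_def)

lemma PM_pow: "b \<in> P M \<Longrightarrow> b [^] (k::nat) \<in> P M"
proof (induction k)
  case 0 then show ?case using one_Pnnj[of j0] by (simp add: M_def)
next
  case (Suc k)
  then have "b [^] k \<otimes> b \<in> smul (P M) (P M)" by (auto simp: smul_def)
  then show ?case using PM_closed by simp
qed

lemma PM_subgroup: "subgroup (P M) G"
proof (rule subgroupI)
  show "P M \<subseteq> carrier G" by (rule P_sub)
  show "P M \<noteq> {}" using one_Pnnj[of j0] by (auto simp: M_def)
  fix a b assume a: "a \<in> P M"
  then have ac: "a \<in> carrier G" using P_sub by blast
  have og: "order G \<ge> 1" using fin by (metis One_nat_def Suc_leI card_gt_0_iff empty_iff one_closed order_def)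
  have "a [^] (order G - 1) \<otimes> a = a [^] order G"
    using og by (metis Suc_diff_1 less_le_trans nat_pow_Suc zero_less_one)
  also have "\<dots> = \<one>" by (rule pow_order_eq_1[OF ac])
  finally have "inv a = a [^] (order G - 1)" using ac by (intro inv_equality) auto
  then show "inv a \<in> P M" using PM_pow[OF a] by simp
  assume "b \<in> P M"
  then have "a \<otimes> b \<in> smul (P M) (P M)" using a by (auto simp: smul_def)
  then show "a \<otimes> b \<in> P M" using PM_closed by simp
qed

lemma Pnn_PM: "P nn \<subseteq> P M"
proof
  fix p assume p: "p \<in> P nn"
  have e: "nn * j0 = nn * (j0 - 1) + nn" using j0_prop by (cases j0) auto
  have "P M = smul (P (nn * (j0 - 1))) (P nn)"
    unfolding M_def by (subst e) (rule P_add)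
  moreover have "\<one> \<otimes> p \<in> smul (P (nn * (j0 - 1))) (P nn)" using p one_Pnnj by (auto simp: smul_def)
  moreover have "p \<in> carrier G" using p P_sub by blast
  ultimately show "p \<in> P M" by simp
qed

lemma PM_H: "P M = H"
proof
  show "P M \<subseteq> H" using Pnnj_H by (simp add: M_def)
  show "H \<subseteq> P M" unfolding H_def G_x_def nn_def[symmetric]
    by (rule generate_subgroup_incl[OF Pnn_PM PM_subgroup])
qed

end


context fx begin

definition c where "c = c_x G x"

lemma c_def': "c g = (if g \<in> H then 1 / real (card H) else 0)"
  by (simp add: c_def c_x_def H_def)

lemma cardH_pos: "card H > 0" using H_fin one_H card_gt_0_iff by blast

lemma inH_iff: "h \<in> H \<Longrightarrow> g \<in> carrier G \<Longrightarrow> (inv h \<otimes> g \<in> H) = (g \<in> H)"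
proof
  assume h: "h \<in> H" and g: "g \<in> carrier G" and "inv h \<otimes> g \<in> H"
  then have "h \<otimes> (inv h \<otimes> g) \<in> H" using subgroup.m_closed[OF H_subgroup] by blast
  moreover have "h \<in> carrier G" using h H_carrier by blast
  ultimately show "g \<in> H" using g cancel1 by metis
next
  assume h: "h \<in> H" and "g \<in> H"
  then show "inv h \<otimes> g \<in> H" by (intro subgroup.m_closed[OF H_subgroup] subgroup.m_inv_closed[OF H_subgroup])
qed

lemma c_out: "g \<notin> H \<Longrightarrow> c g = 0" by (simp add: c_def')

lemma c_galg: "c \<in> galg G" using H_carrier by (auto simp: galg_def c_def')

lemma c_nonneg: "c g \<ge> 0" by (simp add: c_def')

lemma sum_H: "(\<And>g. g \<notin> H \<Longrightarrow> f g = 0) \<Longrightarrow> (\<Sum>g\<in>carrier G. f g) = (\<Sum>g\<in>H. (f g :: real))"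
  by (rule sum.mono_neutral_right[OF fin H_carrier]) auto

lemma c_mass: "(\<Sum>g\<in>carrier G. c g) = 1"
proof -
  have "(\<Sum>g\<in>carrier G. c g) = (\<Sum>g\<in>H. c g)" by (rule sum_H) (simp add: c_out)
  also have "\<dots> = (\<Sum>g\<in>H. 1 / real (card H))" by (simp add: c_def')
  also have "\<dots> = 1" using cardH_pos by simp
  finally show ?thesis .
qed

definition suppH :: "('a \<Rightarrow> real) \<Rightarrow> bool" where "suppH z \<longleftrightarrow> (\<forall>g. z g \<noteq> 0 \<longrightarrow> g \<in> H)"

lemma suppH_D: "suppH z \<Longrightarrow> g \<notin> H \<Longrightarrow> z g = 0" by (auto simp: suppH_def)

lemma absorb_right: "suppH z \<Longrightarrow> gconv G z c = (\<lambda>g. (\<Sum>h\<in>carrier G. z h) * c g)"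
proof
  fix g assume z: "suppH z"
  show "gconv G z c g = (\<Sum>h\<in>carrier G. z h) * c g"
  proof (cases "g \<in> carrier G")
    case True
    have "gconv G z c g = (\<Sum>h\<in>carrier G. z h * c g)"
      unfolding conv_in[OF True]
    proof (rule sum.cong[OF refl])
      fix h assume h: "h \<in> carrier G"
      show "z h * c (inv h \<otimes> g) = z h * c g"
      proof (cases "z h = 0")
        case False
        then have "h \<in> H" using z by (auto simp: suppH_def)
        then show ?thesis using inH_iff[OF _ True] by (simp add: c_def')
      qed simp
    qed
    then show ?thesis by (simp add: sum_distrib_right)
  next
    case False
    then show ?thesis using H_carrier by (auto simp: conv_out c_def')
  qed
qed

lemma absorb_left: "suppH z \<Longrightarrow> gconv G c z = (\<lambda>g. (\<Sum>h\<in>carrier G. z h) * c g)"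
proof
  fix g assume z: "suppH z"
  show "gconv G c z g = (\<Sum>h\<in>carrier G. z h) * c g"
  proof (cases "g \<in> carrier G")
    case gC: True
    have "gconv G c z g = (\<Sum>h\<in>H. c h * z (inv h \<otimes> g))"
      unfolding conv_in[OF gC] by (rule sum_H) (simp add: c_out)
    also have "\<dots> = (\<Sum>h\<in>H. z (inv h \<otimes> g)) / real (card H)"
      by (simp add: c_def' sum_divide_distrib)
    also have "\<dots> = (\<Sum>h\<in>carrier G. z h) * c g"
    proof (cases "g \<in> H")
      case gH: True
      have "(\<Sum>h\<in>H. z (inv h \<otimes> g)) = (\<Sum>h\<in>H. z h)"
      proof (rule sum.reindex_bij_witness[where i="\<lambda>k. g \<otimes> inv k" and j="\<lambda>h. inv h \<otimes> g"])
        fix a assume a: "a \<in> H"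
        then have ac: "a \<in> carrier G" using H_carrier by blast
        show "g \<otimes> inv (inv a \<otimes> g) = a" using ac gC by (simp add: inv_mult_group m_assoc[symmetric])
        show "inv a \<otimes> g \<in> H" using inH_iff[OF a gC] gH by simp
        show "z (inv a \<otimes> g) = z (inv a \<otimes> g)" by simp
      next
        fix b assume b: "b \<in> H"
        then have bc: "b \<in> carrier G" using H_carrier by blast
        have "inv (g \<otimes> inv b) = inv (inv b) \<otimes> inv g" using bc gC by (intro inv_mult_group) auto
        also have "\<dots> = b \<otimes> inv g" using bc by (simp only: inv_inv)
        finally show "inv (g \<otimes> inv b) \<otimes> g = b" using bc gC by (simp only: m_assoc inv_closed l_inv r_one)
        show "g \<otimes> inv b \<in> H" using b gH by (intro subgroup.m_closed[OF H_subgroup] subgroup.m_inv_closed[OF H_subgroup])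
      qed
      also have "\<dots> = (\<Sum>h\<in>carrier G. z h)" by (rule sum_H[symmetric]) (use z suppH_D in auto)
      finally show ?thesis using gH by (simp add: c_def')
    next
      case gH: False
      have "(\<Sum>h\<in>H. z (inv h \<otimes> g)) = 0"
        by (rule sum.neutral) (use inH_iff gC gH z suppH_D in blast)
      then show ?thesis using gH by (simp add: c_def')
    qed
    finally show ?thesis .
  next
    case False
    then show ?thesis using H_carrier by (auto simp: conv_out c_def')
  qed
qed

lemma suppH_c: "suppH c" by (auto simp: suppH_def c_def' split: if_splits)

lemma suppH_conv: "suppH z \<Longrightarrow> suppH w \<Longrightarrow> suppH (gconv G z w)"
proof (unfold suppH_def, intro allI impI)
  fix g assume z: "\<forall>g. z g \<noteq> 0 \<longrightarrow> g \<in> H" and w: "\<forall>g. w g \<noteq> 0 \<longrightarrow> g \<in> H"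
    and ne: "gconv G z w g \<noteq> 0"
  then have gC: "g \<in> carrier G" using conv_out by blast
  then have "g \<in> gsupp G (gconv G z w)" using ne by (simp add: gsupp_def)
  also have "\<dots> \<subseteq> smul (gsupp G z) (gsupp G w)" by (rule supp_conv_sub)
  also have "\<dots> \<subseteq> H" using z w by (intro smul_H) (auto simp: gsupp_def)
  finally show "g \<in> H" .
qed

lemma suppH_gpow: "suppH z \<Longrightarrow> suppH (gpow G z k)"
proof (induction k)
  case 0 then show ?case by (simp add: suppH_def gdelta_def one_H)
next
  case (Suc k) then show ?case by (simp add: suppH_conv)
qed

lemma suppH_xk: "P k \<subseteq> H \<Longrightarrow> suppH (gpow G x k)"
  using gpow_galg[of x k] by (auto simp: suppH_def gsupp_def galg_def)

definition y where "y = gpow G x M"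

lemma y_suppH: "suppH y" unfolding y_def by (rule suppH_xk) (simp add: PM_H)

lemma y_pos: "g \<in> H \<Longrightarrow> y g > 0"
  using PM_H xk_nonneg[of M g] by (auto simp: y_def gsupp_def less_le)

lemma y_mass: "(\<Sum>g\<in>carrier G. y g) = 1" by (simp add: y_def xk_mass)

lemma y_nonneg: "y g \<ge> 0" by (simp add: y_def xk_nonneg)

definition dl where "dl = Min (y ` H)"

lemma dl_pos: "dl > 0"
proof -
  have "y ` H \<noteq> {}" using one_H by blast
  then show ?thesis unfolding dl_def using H_fin y_pos by (subst Min_gr_iff) auto
qed

lemma dl_le: "g \<in> H \<Longrightarrow> dl \<le> y g"
  using H_fin by (auto simp: dl_def)

definition al where "al = dl * real (card H)"

lemma al_pos: "al > 0" using dl_pos cardH_pos by (simp add: al_def)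

lemma al_le1: "al \<le> 1"
proof -
  have "al = (\<Sum>g\<in>H. dl)" by (simp add: al_def)
  also have "\<dots> \<le> (\<Sum>g\<in>H. y g)" by (rule sum_mono) (rule dl_le)
  also have "\<dots> = 1" using y_mass sum_H[of y] y_suppH suppH_D by metis
  finally show ?thesis .
qed

definition u where "u = (\<lambda>g. y g - al * c g)"

lemma u_nonneg: "u g \<ge> 0"
proof (cases "g \<in> H")
  case True
  then show ?thesis using dl_le[OF True] cardH_pos by (simp add: u_def c_def' al_def)
next
  case False
  then show ?thesis by (simp add: u_def c_out suppH_D[OF y_suppH False])
qed

lemma u_suppH: "suppH u"
  using y_suppH by (auto simp: suppH_def u_def c_out)

lemma u_galg: "u \<in> galg G"
  using u_suppH H_carrier by (auto simp: galg_def suppH_def)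

lemma u_mass: "(\<Sum>g\<in>carrier G. u g) = 1 - al"
  by (simp add: u_def sum_subtractf sum_distrib_left[symmetric] y_mass c_mass)

lemma y_eq: "y = (\<lambda>g. al * c g + 1 * u g)" by (simp add: u_def)

lemma formula: "gpow G y k = (\<lambda>g. (1 - (1 - al) ^ k) * c g + 1 * gpow G u k g)"
proof (induction k)
  case 0 then show ?case by simp
next
  case (Suc k)
  have cy: "gconv G c y = (\<lambda>g. 1 * c g)" using absorb_left[OF y_suppH] y_mass by simp
  have Uc: "gconv G (gpow G u k) c = (\<lambda>g. (1 - al) ^ k * c g)"
    using absorb_right[OF suppH_gpow[OF u_suppH]] by (simp add: mass_gpow u_mass)
  have "gpow G y (Suc k) = gconv G (\<lambda>g. (1 - (1 - al) ^ k) * c g + 1 * gpow G u k g) y"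
    using Suc by simp
  also have "\<dots> = (\<lambda>g. (1 - (1 - al) ^ k) * gconv G c y g + 1 * gconv G (gpow G u k) y g)"
    by (rule conv_lin_left)
  also have "gconv G (gpow G u k) y = (\<lambda>g. al * gconv G (gpow G u k) c g + 1 * gconv G (gpow G u k) u g)"
    by (subst y_eq) (rule conv_lin_right)
  finally show ?case using cy Uc by (simp add: algebra_simps)
qed

lemma uk_bounds: "0 \<le> gpow G u k g" "gpow G u k g \<le> (1 - al) ^ k"
proof -
  show "0 \<le> gpow G u k g" using gpow_nonneg u_nonneg by blast
  have "gpow G u k g \<le> (\<Sum>h\<in>carrier G. gpow G u k h)"
    by (rule entry_le_mass) (auto intro: gpow_nonneg u_nonneg gpow_galg)
  then show "gpow G u k g \<le> (1 - al) ^ k" by (simp add: mass_gpow u_mass)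
qed

lemma ylim: "(\<lambda>k. gpow G y k g) \<longlonglongrightarrow> c g"
proof -
  have q: "(\<lambda>k. (1 - al) ^ k) \<longlonglongrightarrow> 0"
    by (rule LIMSEQ_power_zero) (use al_pos al_le1 in simp)
  have "(\<lambda>k. gpow G u k g) \<longlonglongrightarrow> 0"
    by (rule tendsto_sandwich[OF _ _ tendsto_const q]) (auto simp: uk_bounds)
  then have "(\<lambda>k. (1 - (1 - al) ^ k) * c g + 1 * gpow G u k g) \<longlonglongrightarrow> (1 - 0) * c g + 1 * 0"
    by (intro tendsto_intros q)
  then show ?thesis by (simp add: formula)
qed

end


context fx begin

lemma conv_tendsto_left:
  "(\<And>g. (\<lambda>k. f k g) \<longlonglongrightarrow> L g) \<Longrightarrow> (\<lambda>k. gconv G (f k) w g) \<longlonglongrightarrow> gconv G L w g"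
  by (cases "g \<in> carrier G") (auto simp: gconv_def intro!: tendsto_sum tendsto_mult_right)

lemma conv_tendsto_right:
  "(\<And>g. (\<lambda>k. f k g) \<longlonglongrightarrow> L g) \<Longrightarrow> (\<lambda>k. gconv G w (f k) g) \<longlonglongrightarrow> gconv G w L g"
  by (cases "g \<in> carrier G") (auto simp: gconv_def intro!: tendsto_sum tendsto_mult_left)

lemma y_gpow: "gpow G x (M * k) = gpow G y k" by (simp add: y_def gpow_mult)

lemma xlim: "(\<lambda>k. gpow G x (M * k + s) g) \<longlonglongrightarrow> gconv G c (gpow G x s) g"
proof -
  have "gpow G x (M * k + s) = gconv G (gpow G y k) (gpow G x s)" for k
    by (simp add: gpow_add y_gpow)
  then show ?thesis using conv_tendsto_left[OF ylim] by simp
qed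

lemma comm: "gconv G x c = gconv G c x"
proof
  fix g
  have A: "(\<lambda>k. gconv G x (gpow G y k) g) \<longlonglongrightarrow> gconv G x c g" by (rule conv_tendsto_right[OF ylim])
  have B: "(\<lambda>k. gconv G (gpow G y k) x g) \<longlonglongrightarrow> gconv G c x g" by (rule conv_tendsto_left[OF ylim])
  have "gconv G x (gpow G y k) = gconv G (gpow G y k) x" for k
    using gpow_comm[of x 1 "M * k"] by (simp add: y_gpow gpow_one x_galg)
  then show "gconv G x c g = gconv G c x g" using A B LIMSEQ_unique by simp
qed

definition d where "d = m_x G x"

lemma d_ex: "\<exists>k. k \<ge> 1 \<and> P k \<subseteq> H" using M_ge1 PM_H by blast

lemma d_prop: "d \<ge> 1" "P d \<subseteq> H"
  using LeastI_ex[OF d_ex] by (auto simp: d_def m_x_def H_def)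

lemma d_le: "k \<ge> 1 \<Longrightarrow> P k \<subseteq> H \<Longrightarrow> d \<le> k"
  unfolding d_def m_x_def H_def[symmetric] by (rule Least_le) simp

lemma c_id: "gconv G c (gdelta G \<one>) = c" by (rule conv_delta_right[OF c_galg])

lemma c_absorb_xk: "P k \<subseteq> H \<Longrightarrow> gconv G c (gpow G x k) = c"
  using absorb_left[OF suppH_xk] by (simp add: xk_mass)

lemma c_xdq: "gconv G c (gpow G x (d * q)) = c"
proof (induction q)
  case 0 then show ?case by (simp add: c_id)
next
  case (Suc q)
  have "gconv G c (gpow G x (d * Suc q)) = gconv G (gconv G c (gpow G x (d * q))) (gpow G x d)"
    by (simp add: gpow_add[symmetric] conv_assoc add.commute)
  then show ?case using Suc c_absorb_xk[OF d_prop(2)] by simp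
qed

lemma c_mod: "gconv G c (gpow G x s) = gconv G c (gpow G x (s mod d))"
proof -
  have "gpow G x s = gpow G x (d * (s div d) + s mod d)" by simp
  also have "\<dots> = gconv G (gpow G x (d * (s div d))) (gpow G x (s mod d))" by (rule gpow_add)
  finally show ?thesis by (simp add: conv_assoc[symmetric] c_xdq)
qed

lemma c_M: "gconv G c (gpow G x (M + r)) = gconv G c (gpow G x r)"
  by (simp add: gpow_add conv_assoc[symmetric] c_absorb_xk PM_H)

lemma lim_sup: "(\<lambda>r. gconv G c (gpow G x r)) ` {0..<d} \<subseteq> limset G x"
proof
  fix L assume "L \<in> (\<lambda>r. gconv G c (gpow G x r)) ` {0..<d}"
  then obtain r where L: "L = gconv G c (gpow G x r)" by blast
  define \<sigma> where "\<sigma> = (\<lambda>k. M * k + (M + r) - 1)"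
  have sm: "strict_mono \<sigma>" unfolding strict_mono_Suc_iff \<sigma>_def using M_ge1 by auto
  have sc: "Suc (\<sigma> k) = M * k + (M + r)" for k unfolding \<sigma>_def using M_ge1 by auto
  have "(\<lambda>k. gpow G x (Suc (\<sigma> k))) \<longlonglongrightarrow> L"
    unfolding tendsto_fun_iff sc L
    by (intro allI, subst c_M[symmetric], rule xlim)
  then show "L \<in> limset G x" using sm unfolding limset_def by blast
qed

lemma lim_sub: "limset G x \<subseteq> (\<lambda>r. gconv G c (gpow G x r)) ` {0..<d}"
proof
  fix L assume "L \<in> limset G x"
  then obtain \<sigma> where sm: "strict_mono \<sigma>" and lim: "(\<lambda>k. gpow G x (Suc (\<sigma> k))) \<longlonglongrightarrow> L"
    unfolding limset_def by blast
  have "\<exists>s<M. infinite {k. Suc (\<sigma> k) mod M = s}"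
  proof (rule ccontr)
    assume "\<not> ?thesis"
    then have "finite (\<Union>s<M. {k. Suc (\<sigma> k) mod M = s})" by auto
    moreover have "(\<Union>s<M. {k. Suc (\<sigma> k) mod M = s}) = UNIV" using M_ge1 by auto
    ultimately show False by simp
  qed
  then obtain s where s: "s < M" "infinite {k. Suc (\<sigma> k) mod M = s}" by blast
  define \<tau> :: "nat \<Rightarrow> nat" where "\<tau> = (SOME r. strict_mono r \<and> (\<forall>n. r n \<in> {k. Suc (\<sigma> k) mod M = s}))"
  have tt: "strict_mono \<tau> \<and> (\<forall>n. \<tau> n \<in> {k. Suc (\<sigma> k) mod M = s})"
    unfolding \<tau>_def by (rule someI_ex[OF infinite_enumerate[OF s(2)]])
  then have tm: "strict_mono \<tau>" and t0: "\<forall>n. \<tau> n \<in> {k. Suc (\<sigma> k) mod M = s}" by blast+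
  have t: "Suc (\<sigma> (\<tau> k)) mod M = s" for k using t0 by blast
  define q where "q = (\<lambda>k. Suc (\<sigma> (\<tau> k)) div M)"
  have dec: "Suc (\<sigma> (\<tau> k)) = M * q k + s" for k
    unfolding q_def using t[of k] by (metis mult.commute div_mult_mod_eq)
  have tk: "k \<le> \<sigma> (\<tau> k)" for k using seq_suble[OF sm, of "\<tau> k"] seq_suble[OF tm, of k] by simp
  have qlim: "filterlim q at_top sequentially"
    unfolding filterlim_at_top eventually_sequentially
  proof
    fix Z
    show "\<exists>N. \<forall>k\<ge>N. Z \<le> q k"
    proof (intro exI allI impI)
      fix k assume "Z * M \<le> k"
      then have "Z * M \<le> Suc (\<sigma> (\<tau> k))" using tk[of k] by simp
      then have "Z * M div M \<le> q k" unfolding q_def by (rule div_le_mono)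
      then show "Z \<le> q k" using M_ge1 by simp
    qed
  qed
  have L1: "(\<lambda>k. gpow G x (Suc (\<sigma> (\<tau> k)))) \<longlonglongrightarrow> L"
    using LIMSEQ_subseq_LIMSEQ[OF lim tm] by (simp add: o_def)
  have L2: "(\<lambda>k. gpow G x (Suc (\<sigma> (\<tau> k))) g) \<longlonglongrightarrow> gconv G c (gpow G x s) g" for g
  proof -
    have yq: "(\<lambda>k. gpow G y (q k) h) \<longlonglongrightarrow> c h" for h
      using filterlim_compose[OF ylim qlim] .
    have "(\<lambda>k. gconv G (gpow G y (q k)) (gpow G x s) g) \<longlonglongrightarrow> gconv G c (gpow G x s) g"
      by (rule conv_tendsto_left[OF yq])
    moreover have "gpow G x (Suc (\<sigma> (\<tau> k))) = gconv G (gpow G y (q k)) (gpow G x s)" for k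
      by (simp only: dec gpow_add y_gpow)
    ultimately show ?thesis by simp
  qed
  have "L = gconv G c (gpow G x s)"
  proof
    fix g
    show "L g = gconv G c (gpow G x s) g"
      using L1 L2[of g] unfolding tendsto_fun_iff using LIMSEQ_unique by blast
  qed
  moreover have "s mod d < d" using d_prop by simp
  ultimately show "L \<in> (\<lambda>r. gconv G c (gpow G x r)) ` {0..<d}"
    using c_mod[of s] by (intro image_eqI[of _ _ "s mod d"]) auto
qed

lemma limset_eq: "limset G x = (\<lambda>r. gconv G c (gpow G x r)) ` {0..<d}"
  using lim_sub lim_sup by blast

lemma galg_sub_iff: "x \<in> galg_sub G H \<longleftrightarrow> d = 1"
proof
  assume "x \<in> galg_sub G H"
  then have "P 1 \<subseteq> H" by (auto simp: galg_sub_def gsupp_def)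
  then show "d = 1" using d_le[of 1] d_prop by simp
next
  assume "d = 1"
  then have "P 1 \<subseteq> H" using d_prop by simp
  then show "x \<in> galg_sub G H" using x_galg by (auto simp: galg_sub_def gsupp_def galg_def)
qed

lemma main_part:
  "(card (limset G x) = 1 \<longleftrightarrow> x \<in> galg_sub G H) \<and> (limset G x = {c} \<longleftrightarrow> x \<in> galg_sub G H)"
proof (cases "d = 1")
  case True
  then have "limset G x = {c}" by (simp add: limset_eq c_id)
  then show ?thesis using True galg_sub_iff by simp
next
  case False
  then have d2: "d \<ge> 2" using d_prop by simp
  have "\<not> P 1 \<subseteq> H" using d_le[of 1] False d_prop by auto
  then obtain a where a: "a \<in> carrier G" "x a \<noteq> 0" "a \<notin> H" by (auto simp: gsupp_def)
  have e1: "inv \<one> \<otimes> a = a" using a by simp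
  have e2: "c \<one> = 1 / real (card H)" using one_H by (simp add: c_def')
  have xa: "x a > 0" using x_nonneg[of a] a(2) by linarith
  have "0 < c \<one> * x (inv \<one> \<otimes> a)"
    unfolding e1 e2 using xa cardH_pos by simp
  also have "\<dots> \<le> (\<Sum>h\<in>carrier G. c h * x (inv h \<otimes> a))"
    by (rule member_le_sum) (auto simp: fin c_nonneg x_nonneg)
  also have "\<dots> = gconv G c x a" using a by (simp add: conv_in)
  finally have "gconv G c x a \<noteq> c a" using a by (simp add: c_out)
  then have ne: "gconv G c x \<noteq> c" by metis
  have m0: "c \<in> limset G x" using d2 limset_eq c_id by force
  have m1: "gconv G c x \<in> limset G x"
  proof -
    have "(1::nat) \<in> {0..<d}" using d2 by simp
    then have "gconv G c (gpow G x 1) \<in> limset G x" unfolding limset_eq by (rule imageI)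
    then show ?thesis by (simp add: gpow_one x_galg)
  qed
  have "card (limset G x) \<noteq> 1"
  proof
    assume "card (limset G x) = 1"
    then obtain e where "limset G x = {e}" by (rule card_1_singletonE)
    then show False using m0 m1 ne by simp
  qed
  moreover have "limset G x \<noteq> {c}" using m1 ne by auto
  ultimately show ?thesis using False galg_sub_iff by simp
qed

lemma main:
  "gconv G x (c_x G x) = gconv G (c_x G x) x
    \<and> limset G x = (\<lambda>r. gconv G (c_x G x) (gpow G x r)) ` {0..<m_x G x}
    \<and> (card (limset G x) = 1 \<longleftrightarrow> x \<in> galg_sub G (G_x G x))
    \<and> (limset G x = {c_x G x} \<longleftrightarrow> x \<in> galg_sub G (G_x G x))"
  using comm limset_eq main_part unfolding c_def d_def H_def by simp

end

theorem theorem1: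
  fixes G :: "('a, 'b) monoid_scheme" and x :: "'a \<Rightarrow> real"
  assumes "group G" and "finite (carrier G)" and "x \<in> simplexS G"
  shows "gconv G x (c_x G x) = gconv G (c_x G x) x
    \<and> limset G x = (\<lambda>r. gconv G (c_x G x) (gpow G x r)) ` {0..<m_x G x}
    \<and> (card (limset G x) = 1 \<longleftrightarrow> x \<in> galg_sub G (G_x G x))
    \<and> (limset G x = {c_x G x} \<longleftrightarrow> x \<in> galg_sub G (G_x G x))"
proof -
  interpret fx G x
    using assms by (simp add: fx_def fgrp_def fgrp_axioms_def fx_axioms_def)
  show ?thesis by (rule main)
qed

end
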